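(* Let $n\ge 3$ and let $A_1A_2\dots A_n$ be a polygon in the Euclidean plane, with indices of vertices taken modulo $n$ (so $A_{n+1}=A_1$, etc.). Let $s,t$ be positive integers with $2s+t=n$, and let $M$ be a point of the plane distinct from all vertices $A_1,\dots,A_n$. Suppose that for every $i\in\{1,\dots,n\}$ and every $j\in\{i+s,i+s+1,\dots,i+s+t-1\}$ (indices mod $n$) the line $A_iM$ meets the line $A_jA_{j+1}$ in a single point $M_{ij}$, and that $M_{ij}\notin\{A_j,A_{j+1}\}$. Then $$\prod_{i=1}^{n}\ \prod_{j=i+s}^{i+s+t-1}\frac{\overline{M_{ij}A_j}}{\overline{M_{ij}A_{j+1}}}=(-1)^n .$$
   Context: For three collinear points $X,Y,Z$ with $X\neq Z$, $\frac{\overline{XY}}{\overline{XZ}}$ denotes the ratio of signed (directed) lengths along their common line: it equals $|XY|/|XZ|$ if $Y$ and $Z$ lie on the same side of $X$ on that line, and $-|XY|/|XZ|$ otherwise. *)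

theory Defs
  imports "HOL-Analysis.Analysis"
begin

text \<open>Signed ratio XY/XZ of collinear points X, Y, Z (X \<noteq> Z): positive iff Y and Z
  lie on the same side of X on their common line (Y = X gives 0).\<close>
definition signed_ratio :: "real^2 \<Rightarrow> real^2 \<Rightarrow> real^2 \<Rightarrow> real" where
  "signed_ratio X Y Z =
     (if (\<exists>c::real. c \<ge> 0 \<and> Y - X = c *\<^sub>R (Z - X))
      then dist X Y / dist X Z
      else - (dist X Y / dist X Z))"

end

theory Submission
  imports Defs
begin

definition cr :: "real^2 \<Rightarrow> real^2 \<Rightarrow> real" where
  "cr u v = u$1 * v$2 - u$2 * v$1"

lemma vec2_eq: "(x::real^2) = y \<longleftrightarrow> x$1 = y$1 \<and> x$2 = y$2"
  by (metis (mono_tags, lifting) exhaust_2 vec_eq_iff)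

lemma cr_zero_par:
  fixes x w :: "real^2"
  assumes "w \<noteq> 0" "cr x w = 0"
  shows "\<exists>c. x = c *\<^sub>R w"
proof (cases "w$1 = 0")
  case True
  then have w2: "w$2 \<noteq> 0" using assms(1) by (auto simp: vec2_eq)
  have "x$1 = 0" using assms(2) True w2 by (simp add: cr_def)
  then have "x = (x$2 / w$2) *\<^sub>R w" using True w2 by (simp add: vec2_eq)
  then show ?thesis by blast
next
  case False
  have "x$2 * w$1 = x$1 * w$2" using assms(2) by (simp add: cr_def)
  then have "x$2 = x$1 / w$1 * w$2" using False by (simp add: field_simps)
  then have "x = (x$1 / w$1) *\<^sub>R w" using False by (simp add: vec2_eq)
  then show ?thesis by blast
qed

lemma cr_zero_hull:
  fixes a m x :: "real^2"
  assumes "m \<noteq> a" "cr (x - m) (a - m) = 0"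
  shows "x \<in> affine hull {a, m}"
proof -
  obtain c where c: "x - m = c *\<^sub>R (a - m)" using cr_zero_par[of "a - m" "x - m"] assms by auto
  have "x = c *\<^sub>R a + (1 - c) *\<^sub>R m" using c by (simp add: algebra_simps)
  then show ?thesis unfolding affine_hull_2 by force
qed

lemma key:
  fixes a m p b1 b2 :: "real^2"
  assumes "m \<noteq> a" "affine hull {a, m} \<inter> affine hull {b1, b2} = {p}" "p \<noteq> b1" "p \<noteq> b2"
  shows "signed_ratio p b1 b2 = cr (b1 - m) (a - m) / cr (b2 - m) (a - m)
     \<and> cr (b1 - m) (a - m) \<noteq> 0 \<and> cr (b2 - m) (a - m) \<noteq> 0"
proof -
  have pa: "p \<in> affine hull {a, m}" and pb: "p \<in> affine hull {b1, b2}" using assms(2) by auto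
  obtain u v where "p = u *\<^sub>R a + v *\<^sub>R m" "u + v = 1" using pa unfolding affine_hull_2 by blast
  then have u: "p = u *\<^sub>R a + (1 - u) *\<^sub>R m" by (simp add: eq_diff_eq')
  obtain b' b where "p = b' *\<^sub>R b1 + b *\<^sub>R b2" "b' + b = 1" using pb unfolding affine_hull_2 by blast
  then have b: "p = (1 - b) *\<^sub>R b1 + b *\<^sub>R b2" by (metis add_diff_cancel_right')
  have g1: "cr (b1 - m) (a - m) \<noteq> 0"
  proof
    assume "cr (b1 - m) (a - m) = 0"
    then have "b1 \<in> affine hull {a, m}" using cr_zero_hull assms(1) by blast
    moreover have "b1 \<in> affine hull {b1, b2}" by (simp add: hull_inc)
    ultimately have "b1 \<in> {p}" using assms(2) by (metis IntI)
    then show False using assms(3) by simp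
  qed
  have g2: "cr (b2 - m) (a - m) \<noteq> 0"
  proof
    assume "cr (b2 - m) (a - m) = 0"
    then have "b2 \<in> affine hull {a, m}" using cr_zero_hull assms(1) by blast
    moreover have "b2 \<in> affine hull {b1, b2}" by (simp add: hull_inc)
    ultimately have "b2 \<in> {p}" using assms(2) by (metis IntI)
    then show False using assms(4) by simp
  qed
  define d where "d = b2 - b1"
  define r where "r = cr (b1 - m) (a - m) / cr (b2 - m) (a - m)"
  have e1: "b1 - p = (- b) *\<^sub>R d" using b by (simp add: d_def algebra_simps)
  have e2: "b2 - p = (1 - b) *\<^sub>R d" using b by (simp add: d_def algebra_simps)
  have "p - m = u *\<^sub>R (a - m)" using u by (simp add: algebra_simps)
  then have pm: "cr (p - m) (a - m) = 0" by (simp only:) (simp add: cr_def algebra_simps)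
  have crsplit: "\<And>x. cr (x - m) (a - m) = cr (x - p) (a - m) + cr (p - m) (a - m)"
    by (simp add: cr_def algebra_simps)
  have h1: "cr (b1 - m) (a - m) = - b * cr d (a - m)"
    using crsplit[of b1] pm e1 by (simp add: cr_def algebra_simps)
  have h2: "cr (b2 - m) (a - m) = (1 - b) * cr d (a - m)"
    using crsplit[of b2] pm e2 by (simp add: cr_def algebra_simps)
  have nb: "1 - b \<noteq> 0" using h2 g2 by auto
  have cd: "cr d (a - m) \<noteq> 0" using h2 g2 by auto
  have rv: "r = - b / (1 - b)" unfolding r_def h1 h2 using cd nb by (simp add: field_simps)
  have rel: "b1 - p = r *\<^sub>R (b2 - p)" unfolding e1 e2 rv using nb by simp
  have nz: "b2 - p \<noteq> 0" using assms(4) by simp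
  have dd: "dist p b1 = \<bar>r\<bar> * dist p b2"
    by (simp add: dist_norm norm_minus_commute[of p] rel)
  have dpos: "dist p b2 \<noteq> 0" using assms(4) by simp
  have "signed_ratio p b1 b2 = r"
  proof (cases "\<exists>c::real. c \<ge> 0 \<and> b1 - p = c *\<^sub>R (b2 - p)")
    case True
    then obtain c where c: "c \<ge> 0" "b1 - p = c *\<^sub>R (b2 - p)" by blast
    have "(c - r) *\<^sub>R (b2 - p) = 0" using c(2) rel by (simp add: algebra_simps)
    then have "c = r" using nz by simp
    then show ?thesis using True c dd dpos unfolding signed_ratio_def by simp
  next
    case False
    then have "r < 0" using rel by (metis not_le)
    then show ?thesis using False dd dpos unfolding signed_ratio_def by simp
  qed
  then show ?thesis using g1 g2 r_def by simp
qed


lemma tele: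
  fixes f :: "nat \<Rightarrow> real"
  assumes "\<forall>j. a \<le> j \<and> j \<le> Suc (a + t) \<longrightarrow> f j \<noteq> 0"
  shows "(\<Prod>j\<in>{a..a+t}. f j / f (Suc j)) = f a / f (Suc (a + t))"
  using assms
proof (induction t)
  case 0
  then show ?case by simp
next
  case (Suc t)
  have IH: "(\<Prod>j\<in>{a..a+t}. f j / f (Suc j)) = f a / f (Suc (a + t))"
    using Suc by auto
  have nz: "f (Suc (a + t)) \<noteq> 0" using Suc.prems by auto
  have "(\<Prod>j\<in>{a..a+Suc t}. f j / f (Suc j)) = f (Suc (a+t)) / f (Suc (Suc (a+t))) * (\<Prod>j\<in>{a..a+t}. f j / f (Suc j))"
    by simp
  also have "\<dots> = f a / f (Suc (a + Suc t))" using IH nz by simp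
  finally show ?case .
qed

lemma shift1:
  fixes g :: "nat \<Rightarrow> real"
  assumes "\<forall>k. g (k + n) = g k"
  shows "(\<Prod>i\<in>{1..n}. g (Suc i)) = (\<Prod>i\<in>{1..n}. g i)"
proof (cases "n = 0")
  case True then show ?thesis by simp
next
  case False
  have "(\<Prod>i\<in>{1..n}. g (Suc i)) = (\<Prod>i\<in>{Suc 1..Suc n}. g i)"
    by (simp only: prod.shift_bounds_cl_Suc_ivl)
  also have "\<dots> = g (Suc n) * (\<Prod>i\<in>{2..n}. g i)" using False by (simp add: numeral_2_eq_2)
  also have "g (Suc n) = g 1" using assms[rule_format, of 1] by simp
  also have "g 1 * (\<Prod>i\<in>{2..n}. g i) = (\<Prod>i\<in>{1..n}. g i)"
    using False by (simp add: prod.atLeast_Suc_atMost numeral_2_eq_2)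
  finally show ?thesis .
qed

lemma shift:
  fixes h :: "nat \<Rightarrow> real"
  assumes "\<forall>k. h (k + n) = h k"
  shows "(\<Prod>i\<in>{1..n}. h (i + s)) = (\<Prod>i\<in>{1..n}. h i)"
proof (induction s)
  case 0 then show ?case by simp
next
  case (Suc s)
  have "(\<Prod>i\<in>{1..n}. h (i + Suc s)) = (\<Prod>i\<in>{1..n}. (\<lambda>i. h (i + s)) (Suc i))" by simp
  also have "\<dots> = (\<Prod>i\<in>{1..n}. h (i + s))"
    by (rule shift1) (metis add.commute add.left_commute assms)
  finally show ?case using Suc by simp
qed

theorem theorem1:
  fixes n s t :: nat
    and A :: "nat \<Rightarrow> real^2"
    and M :: "real^2"
    and P :: "nat \<Rightarrow> nat \<Rightarrow> real^2"
  assumes "n \<ge> 3"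
    and "s > 0" and "t > 0" and "2 * s + t = n"
    and periodic: "\<forall>k. A (k + n) = A k"
    and "\<forall>i\<in>{1..n}. M \<noteq> A i"
    and inter: "\<forall>i\<in>{1..n}. \<forall>j\<in>{i+s..i+s+t-1}.
          affine hull {A i, M} \<inter> affine hull {A j, A (j+1)} = {P i j}
          \<and> P i j \<noteq> A j \<and> P i j \<noteq> A (j+1)"
  shows "(\<Prod>i\<in>{1..n}. \<Prod>j\<in>{i+s..i+s+t-1}. signed_ratio (P i j) (A j) (A (j+1)))
           = (-1::real) ^ n"
proof -
  define D where "D k i = cr (A k - M) (A i - M)" for k i
  obtain t' where t': "t = Suc t'" using assms(3) gr0_implies_Suc by blast
  have rng: "{i+s..i+s+t-1} = {i+s..i+s+t'}" for i using t' by simp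
  have kj: "signed_ratio (P i j) (A j) (A (j+1)) = D j i / D (Suc j) i \<and> D j i \<noteq> 0 \<and> D (Suc j) i \<noteq> 0"
    if "i \<in> {1..n}" "j \<in> {i+s..i+s+t'}" for i j
  proof -
    have "M \<noteq> A i" using assms(6) that(1) by blast
    moreover have "affine hull {A i, M} \<inter> affine hull {A j, A (j+1)} = {P i j}
          \<and> P i j \<noteq> A j \<and> P i j \<noteq> A (j+1)" using inter that rng by blast
    ultimately show ?thesis using key[of M "A i" "A j" "A (j+1)" "P i j"] unfolding D_def by simp
  qed
  have inner: "(\<Prod>j\<in>{i+s..i+s+t-1}. signed_ratio (P i j) (A j) (A (j+1))) = D (i+s) i / D (i+s+t) i
     \<and> D (i+s) i \<noteq> 0" if "i \<in> {1..n}" for i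
  proof -
    have "(\<Prod>j\<in>{i+s..i+s+t-1}. signed_ratio (P i j) (A j) (A (j+1))) = (\<Prod>j\<in>{i+s..i+s+t'}. D j i / D (Suc j) i)"
      unfolding rng using kj[OF that] by (intro prod.cong) auto
    also have "\<dots> = D (i+s) i / D (Suc (i+s+t')) i"
    proof (rule tele, intro allI impI)
      fix j assume "i + s \<le> j \<and> j \<le> Suc (i + s + t')"
      then have "j \<in> {i+s..i+s+t'} \<or> (j = Suc (i+s+t'))" by auto
      then show "D j i \<noteq> 0" using kj[OF that] by force
    qed
    finally show ?thesis using t' kj[OF that, of "i+s"] by simp
  qed
  have Dper1: "D (k + n) i = D k i" for k i unfolding D_def using periodic by simp
  have Dper2: "D k (i + n) = D k i" for k i unfolding D_def using periodic by simp
  define X where "X = (\<Prod>i\<in>{1..n}. D (i+s) i)"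
  have X0: "X \<noteq> 0" unfolding X_def using inner by (simp add: prod_zero_iff)
  have "(\<Prod>i\<in>{1..n}. D (i+s+t) i) = (\<Prod>i\<in>{1..n}. (\<lambda>i. D (i+s+t) i) (i + s))"
    by (rule shift[symmetric]) (metis Dper1 Dper2 add.commute add.left_commute)
  also have "\<dots> = (\<Prod>i\<in>{1..n}. D i (i+s))"
  proof (rule prod.cong)
    fix i
    have "i + s + s + t = i + n" using assms(4) by simp
    then show "D (i + s + s + t) (i + s) = D i (i + s)" using Dper1 by metis
  qed simp
  also have "\<dots> = (\<Prod>i\<in>{1..n}. (-1) * D (i+s) i)"
    by (intro prod.cong) (auto simp: D_def cr_def)
  also have "\<dots> = (-1) ^ n * X" unfolding X_def by (simp only: prod.distrib prod_constant card_atLeastAtMost) simp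
  finally have Y: "(\<Prod>i\<in>{1..n}. D (i+s+t) i) = (-1) ^ n * X" .
  have "(\<Prod>i\<in>{1..n}. \<Prod>j\<in>{i+s..i+s+t-1}. signed_ratio (P i j) (A j) (A (j+1)))
      = (\<Prod>i\<in>{1..n}. D (i+s) i / D (i+s+t) i)"
    using inner by (intro prod.cong) auto
  also have "\<dots> = X / (\<Prod>i\<in>{1..n}. D (i+s+t) i)" unfolding X_def by (simp add: prod_dividef)
  also have "\<dots> = (-1) ^ n" unfolding Y using X0 by (cases "even n") auto
  finally show ?thesis .
qed

end
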